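(* Let $\mathbf{a}=(a_1,a_2,a_3,a_4)\in\mathbb{N}^4$ with $a_1\le a_2\le a_3\le a_4$, let $A=a_1+a_2+a_3+a_4$, let $m\ge3$ be an integer, $a\in\mathbb{N}$, $b\in\mathbb{Z}$, and $N=\frac{m-2}{2}(a-b)+b$. Suppose the system $$a=a_1x_1^2+a_2x_2^2+a_3x_3^2+a_4x_4^2,\qquad b=a_1x_1+a_2x_2+a_3x_3+a_4x_4$$ has an integer solution $(x_1,x_2,x_3,x_4)\in\mathbb{Z}^4$. Then: (i) $a\equiv b\pmod 2$, $Aa-b^2\ge0$, and $N=P_{m,\mathbf{a}}(x_1,x_2,x_3,x_4)$; (ii) if $b\ge\sqrt{a_2+a_3+a_4}\cdot\sqrt a$, then $N$ is represented by $P_{m,\mathbf{a}}$ over $\mathbb{N}_0$.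
   Context: $P_m(x)=\frac{m-2}{2}(x^2-x)+x$ for integers $x$, and $P_{m,\mathbf{a}}(\mathbf{x})=\sum_{i=1}^4a_iP_m(x_i)$. $N$ is represented by $P_{m,\mathbf{a}}$ over $\mathbb{N}_0$ if $N=P_{m,\mathbf{a}}(\mathbf{x})$ for some $\mathbf{x}\in\mathbb{N}_0^4$, where $\mathbb{N}_0=\{0,1,2,\dots\}$. *)

theory Defs
  imports Complex_Main
begin

text \<open>Generalized m-gonal number P_m(x) = (m-2)/2 (x^2 - x) + x for integers x.
  Since x^2 - x is always even, the integer division below is exact.\<close>
definition polyg :: "int \<Rightarrow> int \<Rightarrow> int" where
  "polyg m x = ((m - 2) * (x^2 - x)) div 2 + x"

definition polygF :: "int \<Rightarrow> (nat \<Rightarrow> int) \<Rightarrow> (nat \<Rightarrow> int) \<Rightarrow> int" where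
  "polygF m a x = (\<Sum>i=1..4. a i * polyg m (x i))"

definition represented_N0 :: "int \<Rightarrow> (nat \<Rightarrow> int) \<Rightarrow> real \<Rightarrow> bool" where
  "represented_N0 m a N \<longleftrightarrow> (\<exists>y::nat \<Rightarrow> int. (\<forall>i\<in>{1..4}. y i \<ge> 0) \<and> N = of_int (polygF m a y))"

end

theory Submission
  imports Defs
begin

lemma sum14: "(\<Sum>i=(1::nat)..4. f i) = f 1 + f 2 + f 3 + f 4"
  by (simp add: eval_nat_numeral add.assoc)

lemma cs3:
  fixes p q r u v w :: int
  assumes "p \<ge> 0" "q \<ge> 0" "r \<ge> 0"
  shows "(p*u+q*v+r*w)^2 \<le> (p+q+r)*(p*u^2+q*v^2+r*w^2)"
proof -
  have e: "(p+q+r)*(p*u^2+q*v^2+r*w^2) - (p*u+q*v+r*w)^2 = p*q*(u-v)^2 + p*r*(u-w)^2 + q*r*(v-w)^2"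
    by (simp add: power2_eq_square algebra_simps)
  have "p*q*(u-v)^2 \<ge> 0" "p*r*(u-w)^2 \<ge> 0" "q*r*(v-w)^2 \<ge> 0" using assms by simp_all
  thus ?thesis using e by linarith
qed

lemma key:
  fixes c p q r t u v w S A B :: int
  assumes "c > 0" "p \<ge> 0" "q \<ge> 0" "r \<ge> 0" "p+q+r \<le> S" "t < 0"
    "B = c*t+p*u+q*v+r*w" "A = c*t^2 + p*u^2 + q*v^2 + r*w^2" "B \<ge> 0" "B^2 \<ge> S*A"
  shows False
proof -
  define T where "T = p*u+q*v+r*w"
  define Q where "Q = p*u^2+q*v^2+r*w^2"
  have ct: "c*t < 0" using assms by (simp add: mult_pos_neg)
  have BT: "B < T" using assms ct T_def by linarith
  have "B^2 < T^2" using BT assms(9) by (simp add: power_strict_mono)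
  have Q0: "Q \<ge> 0" using assms Q_def by simp
  have QA: "Q \<le> A" using assms Q_def by simp
  have S0: "S \<ge> 0" using assms by linarith
  have "T^2 \<le> (p+q+r)*Q" using cs3 assms T_def Q_def by simp
  also have "\<dots> \<le> S*Q" using Q0 assms by (simp add: mult_right_mono)
  also have "\<dots> \<le> S*A" using S0 QA by (simp add: mult_left_mono)
  finally show False using \<open>B^2 < T^2\<close> assms by linarith
qed

lemma polyg_real: "real_of_int (polyg m x) = (real_of_int m - 2)/2 * (real_of_int x^2 - real_of_int x) + real_of_int x"
proof -
  have "even (x^2 - x)" by simp
  then have "2 dvd ((m-2)*(x^2-x))" by simp
  then obtain k where k: "(m-2)*(x^2-x) = 2*k" by blast
  have r: "real_of_int (m-2) * (real_of_int x^2 - real_of_int x) = 2 * real_of_int k"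
    using arg_cong[OF k, of real_of_int] by simp
  have "polyg m x = k + x" unfolding polyg_def using k by simp
  then have "real_of_int (polyg m x) = real_of_int k + real_of_int x" by simp
  then show ?thesis using r by (simp add: field_simps)
qed

theorem lemma3p1:
  fixes a :: "nat \<Rightarrow> int" and m :: int and aa :: nat and b :: int and N :: real
    and x :: "nat \<Rightarrow> int"
  assumes a_pos: "0 < a 1" and a12: "a 1 \<le> a 2" and a23: "a 2 \<le> a 3" and a34: "a 3 \<le> a 4"
    and m3: "m \<ge> 3"
    and N_def: "N = (real_of_int m - 2) / 2 * (real aa - real_of_int b) + real_of_int b"
    and sol_a: "int aa = (\<Sum>i=1..4. a i * (x i)^2)"
    and sol_b: "b = (\<Sum>i=1..4. a i * x i)"
  shows "int aa mod 2 = b mod 2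
     \<and> (\<Sum>i=1..4. a i) * int aa - b^2 \<ge> 0
     \<and> N = real_of_int (polygF m a x)
     \<and> (real_of_int b \<ge> sqrt (real_of_int (a 2 + a 3 + a 4)) * sqrt (real aa)
          \<longrightarrow> represented_N0 m a N)"
proof -
  have A: "int aa = a 1 * x 1^2 + a 2 * x 2^2 + a 3 * x 3^2 + a 4 * x 4^2" using sol_a sum14 by simp
  have B: "b = a 1 * x 1 + a 2 * x 2 + a 3 * x 3 + a 4 * x 4" using sol_b sum14 by simp
  have p1: "int aa mod 2 = b mod 2"
  proof -
    have "int aa - b = a 1 * (x 1^2 - x 1) + a 2 * (x 2^2 - x 2) + a 3 * (x 3^2 - x 3) + a 4 * (x 4^2 - x 4)"
      using A B by (simp add: algebra_simps)
    moreover have "\<And>y::int. even (y^2 - y)" by simp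
    ultimately have "even (int aa - b)" by simp
    thus ?thesis by (metis dvd_imp_mod_0 mod_0_imp_dvd mod_eq_dvd_iff)
  qed
  have p2: "(\<Sum>i=1..4. a i) * int aa - b^2 \<ge> 0"
  proof -
    have "(a 2*x 2+a 3*x 3+a 4*x 4)^2 \<le> (a 2+a 3+a 4)*(a 2*x 2^2+a 3*x 3^2+a 4*x 4^2)"
      using cs3 a_pos a12 a23 a34 by simp
    have e: "(a 1+a 2+a 3+a 4)*(a 1*x 1^2+a 2*x 2^2+a 3*x 3^2+a 4*x 4^2) - (a 1*x 1+a 2*x 2+a 3*x 3+a 4*x 4)^2
      = a 1*a 2*(x 1-x 2)^2 + a 1*a 3*(x 1-x 3)^2 + a 1*a 4*(x 1-x 4)^2
      + a 2*a 3*(x 2-x 3)^2 + a 2*a 4*(x 2-x 4)^2 + a 3*a 4*(x 3-x 4)^2"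
      by (simp add: power2_eq_square algebra_simps)
    have "a 1*a 2*(x 1-x 2)^2 \<ge> 0" "a 1*a 3*(x 1-x 3)^2 \<ge> 0" "a 1*a 4*(x 1-x 4)^2 \<ge> 0"
      "a 2*a 3*(x 2-x 3)^2 \<ge> 0" "a 2*a 4*(x 2-x 4)^2 \<ge> 0" "a 3*a 4*(x 3-x 4)^2 \<ge> 0"
      using a_pos a12 a23 a34 by simp_all
    then show ?thesis using e A B sum14[of a] by simp
  qed
  have p3: "N = real_of_int (polygF m a x)"
  proof -
    have "real_of_int (polygF m a x) = (\<Sum>i=1..4. real_of_int (a i) * ((real_of_int m - 2)/2 * (real_of_int (x i)^2 - real_of_int (x i)) + real_of_int (x i)))"
      unfolding polygF_def by (simp add: polyg_real)
    also have "\<dots> = (real_of_int m - 2)/2 * ((\<Sum>i=1..4. real_of_int (a i) * real_of_int (x i)^2) - (\<Sum>i=1..4. real_of_int (a i) * real_of_int (x i))) + (\<Sum>i=1..4. real_of_int (a i) * real_of_int (x i))"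
      unfolding sum14 by (simp add: field_simps)
    also have "\<dots> = N"
    proof -
      have "real aa = (\<Sum>i=1..4. real_of_int (a i) * real_of_int (x i)^2)"
        using arg_cong[OF sol_a, of real_of_int] by simp
      moreover have "real_of_int b = (\<Sum>i=1..4. real_of_int (a i) * real_of_int (x i))"
        using arg_cong[OF sol_b, of real_of_int] by simp
      ultimately show ?thesis using N_def by simp
    qed
    finally show ?thesis by simp
  qed
  have p4: "real_of_int b \<ge> sqrt (real_of_int (a 2 + a 3 + a 4)) * sqrt (real aa) \<longrightarrow> represented_N0 m a N"
  proof
    assume h: "real_of_int b \<ge> sqrt (real_of_int (a 2 + a 3 + a 4)) * sqrt (real aa)"
    define S where "S = a 2 + a 3 + a 4"
    have S0: "S \<ge> 0" using a_pos a12 a23 a34 S_def by simp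
    have h0: "0 \<le> sqrt (real_of_int S) * sqrt (real aa)" using S0 by simp
    have h': "sqrt (real_of_int S) * sqrt (real aa) \<le> real_of_int b" using h S_def by simp
    have "real_of_int b \<ge> 0" using h' h0 by linarith
    then have b0: "b \<ge> 0" by simp
    have "(sqrt (real_of_int S) * sqrt (real aa))^2 \<le> (real_of_int b)^2"
      using h' h0 by (simp add: power_mono)
    then have "real_of_int S * real aa \<le> (real_of_int b)^2" using S0 by (simp add: power_mult_distrib)
    then have bS: "S * int aa \<le> b^2"
      by (metis of_int_le_iff of_int_mult of_int_of_nat_eq of_int_power)
    have "\<forall>i\<in>{1..4}. x i \<ge> 0"
    proof (rule ccontr)
      assume "\<not> ?thesis"
      then obtain i where i: "i \<in> {1..4}" "x i < 0" by force
      then have "i = 1 \<or> i = 2 \<or> i = 3 \<or> i = 4" by auto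
      then show False
      proof (elim disjE)
        assume "i = 1" then show False
          using key[of "a 1" "a 2" "a 3" "a 4" S "x 1" b "x 2" "x 3" "x 4" "int aa"] i A B b0 bS S_def a_pos a12 a23 a34
          by (simp add: algebra_simps)
      next
        assume "i = 2" then show False
          using key[of "a 2" "a 1" "a 3" "a 4" S "x 2" b "x 1" "x 3" "x 4" "int aa"] i A B b0 bS S_def a_pos a12 a23 a34
          by (simp add: algebra_simps)
      next
        assume "i = 3" then show False
          using key[of "a 3" "a 1" "a 2" "a 4" S "x 3" b "x 1" "x 2" "x 4" "int aa"] i A B b0 bS S_def a_pos a12 a23 a34
          by (simp add: algebra_simps)
      next
        assume "i = 4" then show False
          using key[of "a 4" "a 1" "a 2" "a 3" S "x 4" b "x 1" "x 2" "x 3" "int aa"] i A B b0 bS S_def a_pos a12 a23 a34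
          by (simp add: algebra_simps)
      qed
    qed
    then show "represented_N0 m a N" unfolding represented_N0_def using p3 by blast
  qed
  show ?thesis using p1 p2 p3 p4 by blast
qed

end
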